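(* Let $D\ge 1$. If there is a $\bar{D}$-separable block design (multiset) $\mathcal{F}$ with $N$ blocks on vertex set $[T]$, then there exists a $(T,N,D)$-tropical code within maximum delay $0$; namely, with a bijection $j:\mathcal{F}\to[N]$, the matrix $S_{t,j(B)}=0$ if $t\in B$ and $S_{t,j(B)}=\infty$ if $t\notin B$ is such a code.
   Context: Tropical arithmetic on $\mathbb{R}\cup\{\infty\}$: $x\oplus y=\min(x,y)$, $x\odot y=x+y$, with $x\oplus\infty=x$ and $x\odot\infty=\infty$. For a matrix $S$ with $T$ rows and $N$ columns and a column vector $\mathbf{x}$ of length $N$, $S\odot\mathbf{x}$ is the vector whose $t$-th entry is $\min_{j}(S_{tj}+x_j)$. A $(T,N,D)$-tropical code is a matrix $S\in(\{0\}\cup\mathbb{N}\cup\{\infty\})^{T\times N}$ such that for any two distinct vectors $\mathbf{x},\mathbf{y}\in(\{0\}\cup\mathbb{N}\cup\{\infty\})^{N}$, each having at most $D$ finite entries, $S\odot\mathbf{x}\ne S\odot\mathbf{y}$. It is within maximum delay $\ell$ if $S\in\{0,1,\dots,\ell,\infty\}^{T\times N}$. A block design here is a multiset $\mathcal{F}$ of subsets of $[T]$ whose elements (blocks) are individually indexed; it is $\bar{D}$-separable if for any two different subcollections $\{Z_1,\dots,Z_r\}\ne\{B_1,\dots,B_s\}$ of at most $D$ blocks each (different as collections of indexed blocks, $r,s\le D$), $Z_1\cup\dots\cup Z_r\ne B_1\cup\dots\cup B_s$. *)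

theory Defs
  imports Main
begin

(* Tropical semiring on {0,1,2,...} \<union> {\<infinity>}: a value is a nat option, None = \<infinity>. *)

fun tplus :: "nat option \<Rightarrow> nat option \<Rightarrow> nat option" (* tropical product x \<odot> y = x + y *)
  where "tplus (Some a) (Some b) = Some (a + b)"
      | "tplus _ _ = None"

definition tsum :: "nat option set \<Rightarrow> nat option" where
  "tsum A = (if \<exists>a. Some a \<in> A then Some (Min {a. Some a \<in> A}) else None)"

(* matrices: S t j for rows t < T and columns j < N; vectors x j for j < N *)
definition trop_mv :: "nat \<Rightarrow> (nat \<Rightarrow> nat \<Rightarrow> nat option) \<Rightarrow> (nat \<Rightarrow> nat option) \<Rightarrow> nat \<Rightarrow> nat option" where
  "trop_mv N S x t = tsum ((\<lambda>j. tplus (S t j) (x j)) ` {..<N})"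

definition num_finite :: "nat \<Rightarrow> (nat \<Rightarrow> nat option) \<Rightarrow> nat" where
  "num_finite N x = card {j \<in> {..<N}. x j \<noteq> None}"

definition tropical_code :: "nat \<Rightarrow> nat \<Rightarrow> nat \<Rightarrow> (nat \<Rightarrow> nat \<Rightarrow> nat option) \<Rightarrow> bool" where
  "tropical_code T N D S \<longleftrightarrow>
     (\<forall>x y. num_finite N x \<le> D \<longrightarrow> num_finite N y \<le> D \<longrightarrow>
        (\<exists>j<N. x j \<noteq> y j) \<longrightarrow> (\<exists>t<T. trop_mv N S x t \<noteq> trop_mv N S y t))"

definition within_delay :: "nat \<Rightarrow> nat \<Rightarrow> nat \<Rightarrow> (nat \<Rightarrow> nat \<Rightarrow> nat option) \<Rightarrow> bool" where
  "within_delay T N l S \<longleftrightarrow> (\<forall>t<T. \<forall>j<N. \<forall>a. S t j = Some a \<longrightarrow> a \<le> l)"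

(* An indexed block design with N blocks B 0, ..., B (N-1) on vertex set [T] = {0..<T}
   (multiset: blocks may coincide but are distinguished by their index). *)
definition block_design :: "nat \<Rightarrow> nat \<Rightarrow> (nat \<Rightarrow> nat set) \<Rightarrow> bool" where
  "block_design T N B \<longleftrightarrow> (\<forall>j<N. B j \<subseteq> {..<T})"

definition separable :: "nat \<Rightarrow> nat \<Rightarrow> (nat \<Rightarrow> nat set) \<Rightarrow> bool" where
  "separable N D B \<longleftrightarrow>
     (\<forall>I J. I \<subseteq> {..<N} \<longrightarrow> J \<subseteq> {..<N} \<longrightarrow> card I \<le> D \<longrightarrow> card J \<le> D \<longrightarrow> I \<noteq> J \<longrightarrow>
        \<Union>(B ` I) \<noteq> \<Union>(B ` J))"

end

theory Submission
  imports Defs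
begin

lemma tp_eq: "tplus (if t \<in> B j then Some 0 else None) v = (if t \<in> B j then v else None)"
  by (cases v) auto

lemma ex_iff:
  "(\<exists>a. Some a \<in> (\<lambda>j. if t \<in> B j then x j else None) ` {..<N}) \<longleftrightarrow>
   (\<exists>j<N. t \<in> B j \<and> x j \<noteq> None)"
proof
  assume "\<exists>a. Some a \<in> (\<lambda>j. if t \<in> B j then x j else None) ` {..<N}"
  then obtain a j where "j < N" "Some a = (if t \<in> B j then x j else None)" by auto
  then show "\<exists>j<N. t \<in> B j \<and> x j \<noteq> None" by (cases "t \<in> B j") (metis option.distinct(1))+
next
  assume "\<exists>j<N. t \<in> B j \<and> x j \<noteq> None"
  then obtain j a where h: "j < N" "t \<in> B j" "x j = Some a" by auto
  have "Some a = (\<lambda>j. if t \<in> B j then x j else None) j" using h by simp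
  moreover have "j \<in> {..<N}" using h by simp
  ultimately have "Some a \<in> (\<lambda>j. if t \<in> B j then x j else None) ` {..<N}"
    by (rule image_eqI)
  then show "\<exists>a. Some a \<in> (\<lambda>j. if t \<in> B j then x j else None) ` {..<N}" by blast
qed

lemma mv_None:
  "trop_mv N (\<lambda>t j. if t \<in> B j then Some 0 else None) x t = None \<longleftrightarrow>
   \<not>(\<exists>j<N. t \<in> B j \<and> x j \<noteq> None)"
  unfolding trop_mv_def tsum_def tp_eq ex_iff[symmetric] by simp

lemma mv_Some:
  assumes "j < N" "t \<in> B j" "x j = Some a" "\<forall>i<N. i \<noteq> j \<and> t \<in> B i \<longrightarrow> x i = None"
  shows "trop_mv N (\<lambda>t j. if t \<in> B j then Some 0 else None) x t = Some a"
proof -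
  let ?f = "\<lambda>j. if t \<in> B j then x j else None"
  have ex: "\<exists>b. Some b \<in> ?f ` {..<N}" using ex_iff[of t B x N] assms by auto
  have e1: "b = a" if "Some b \<in> ?f ` {..<N}" for b
  proof -
    from that obtain i where i: "i < N" "Some b = ?f i" by auto
    then have tB: "t \<in> B i" by (cases "t \<in> B i") auto
    with i have "x i = Some b" by simp
    have "i = j"
    proof (rule ccontr)
      assume "i \<noteq> j"
      then have "x i = None" using assms(4) i(1) tB by blast
      with \<open>x i = Some b\<close> show False by simp
    qed
    with assms(3) \<open>x i = Some b\<close> show "b = a" by simp
  qed
  have "Some a = ?f j" using assms by simp
  moreover have "j \<in> {..<N}" using assms(1) by simp
  ultimately have e2: "Some a \<in> ?f ` {..<N}" by (rule image_eqI)
  have eq: "{b. Some b \<in> ?f ` {..<N}} = {a}" using e1 e2 by blast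
  show ?thesis unfolding trop_mv_def tsum_def tp_eq using ex eq by simp
qed

theorem mainTheorem11:
  fixes T N D :: nat and B :: "nat \<Rightarrow> nat set"
  assumes "D \<ge> 1"
    and "block_design T N B"
    and "separable N D B"
  shows "tropical_code T N D (\<lambda>t j. if t \<in> B j then Some 0 else None)
       \<and> within_delay T N 0 (\<lambda>t j. if t \<in> B j then Some 0 else None)"
proof
  show "within_delay T N 0 (\<lambda>t j. if t \<in> B j then Some 0 else None)"
    unfolding within_delay_def by auto
  show "tropical_code T N D (\<lambda>t j. if t \<in> B j then Some 0 else None)"
    unfolding tropical_code_def
  proof (intro allI impI)
    fix x y :: "nat \<Rightarrow> nat option"
    let ?S = "\<lambda>t j. if t \<in> B j then Some 0 else (None :: nat option)"
    assume hx: "num_finite N x \<le> D" and hy: "num_finite N y \<le> D" and "\<exists>j<N. x j \<noteq> y j"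
    then obtain j where j: "j < N" "x j \<noteq> y j" by blast
    define I where "I = {j \<in> {..<N}. x j \<noteq> None}"
    define J where "J = {j \<in> {..<N}. y j \<noteq> None}"
    have cI: "card I \<le> D" using hx unfolding I_def num_finite_def .
    have cJ: "card J \<le> D" using hy unfolding J_def num_finite_def .
    have sub: "I \<subseteq> {..<N}" "J \<subseteq> {..<N}" unfolding I_def J_def by auto
    have BT: "\<And>i. i < N \<Longrightarrow> B i \<subseteq> {..<T}" using assms(2) unfolding block_design_def by auto
    show "\<exists>t<T. trop_mv N ?S x t \<noteq> trop_mv N ?S y t"
    proof (cases "I = J")
      case False
      then have "\<Union>(B ` I) \<noteq> \<Union>(B ` J)" using assms(3) cI cJ sub unfolding separable_def by (metis (no_types, lifting))
      then obtain t where t: "(t \<in> \<Union>(B ` I)) \<noteq> (t \<in> \<Union>(B ` J))" by blast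
      then have "t < T" using BT sub by blast
      moreover have "(trop_mv N ?S x t = None) \<noteq> (trop_mv N ?S y t = None)"
        using t unfolding mv_None I_def J_def by auto
      ultimately show ?thesis by metis
    next
      case True
      have jI: "j \<in> I"
      proof (rule ccontr)
        assume "j \<notin> I"
        then have "x j = None" using j unfolding I_def by auto
        moreover have "j \<notin> J" using \<open>j \<notin> I\<close> True by simp
        then have "y j = None" using j unfolding J_def by auto
        ultimately show False using j by simp
      qed
      have fin: "finite I" using sub finite_subset by blast
      have "card (I - {j}) \<le> D" using cI card_Diff1_le[of I j] by linarith
      moreover have "I - {j} \<noteq> I" using jI by blast
      moreover have "I - {j} \<subseteq> {..<N}" using sub by blast
      ultimately have "\<Union>(B ` (I - {j})) \<noteq> \<Union>(B ` I)"
        using assms(3) cI sub unfolding separable_def by (metis (no_types, lifting))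
      then obtain t where t: "t \<in> B j" "\<forall>i\<in>I - {j}. t \<notin> B i" using jI by blast
      have "t < T" using BT j t by blast
      obtain a where a: "x j = Some a" using jI unfolding I_def by auto
      obtain b where b: "y j = Some b" using jI True unfolding J_def by auto
      have "trop_mv N ?S x t = Some a"
        by (rule mv_Some[where B=B and x=x, OF j(1) t(1) a]) (use t in \<open>auto simp: I_def\<close>)
      moreover have "trop_mv N ?S y t = Some b"
        by (rule mv_Some[where B=B and x=y, OF j(1) t(1) b]) (use t True in \<open>auto simp: I_def J_def\<close>)
      ultimately show ?thesis using \<open>t < T\<close> a b j(2) by auto
    qed
  qed
qed

end
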